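(* Let $X_1,\dots,X_n$ ($n\ge 1$) and $Y$ be jointly distributed discrete random variables with $I(\mathbf X;Y)>0$, where $\mathbf X=(X_1,\dots,X_n)$. Let $\Pi:\mathcal A_n\to\mathbb R$ be any partial information decomposition (as defined in the context). Then the average degree of redundancy satisfies $$\bar r=\frac{\sum_{i=1}^n I(X_i;Y)}{I(\mathbf X;Y)}.$$ In particular, $\bar r$ takes the same value for every partial information decomposition $\Pi$ and depends only on the joint distribution of $(\mathbf X,Y)$ through Shannon entropies.
   Context: Notation: $[n]=\{1,\dots,n\}$. For $\mathbf a\subseteq[n]$, $X_{\mathbf a}=(X_i)_{i\in\mathbf a}$, and $X_{[n]}=\mathbf X$. Antichains: $\mathcal A_n$ is the set of all nonempty collections $\alpha$ of nonempty subsets of $[n]$ such that no element of $\alpha$ is a proper subset of another element of $\alpha$. Partial information decomposition (PID): any function $\Pi:\mathcal A_n\to\mathbb R$ satisfying the consistency equation: for every nonempty $\mathbf a\subseteq[n]$, $$I(X_{\mathbf a};Y)=\sum_{\alpha\in\mathcal A_n:\ \exists \mathbf b\in\alpha,\ \mathbf b\subseteq \mathbf a}\Pi(\alpha).$$ Degree of redundancy of $\alpha\in\mathcal A_n$: $r(\alpha)=|\{i\in[n]: \{i\}\in\alpha\}|$. Average degree of redundancy (defined when $I(\mathbf X;Y)>0$): $$\bar r=\sum_{k=0}^n k\sum_{\alpha:\ r(\alpha)=k}\frac{\Pi(\alpha)}{I(\mathbf X;Y)}.$$ *)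

theory Defs
  imports "HOL-Probability.Probability_Mass_Function" "HOL-Analysis.Infinite_Sum"
begin

definition mutual_info :: "('u \<times> 'v) pmf \<Rightarrow> real" where
  "mutual_info p = (\<Sum>\<^sub>\<infinity>(u,v)\<in>UNIV.
      pmf p (u,v) * log 2 (pmf p (u,v) / (pmf (map_pmf fst p) u * pmf (map_pmf snd p) v)))"

text \<open>Joint law of (X_a, Y), where X_a = (X_i)_{i in a} is represented as a function
  restricted to a (undefined outside a).\<close>
definition joint_sub :: "'o pmf \<Rightarrow> (nat \<Rightarrow> 'o \<Rightarrow> 'a) \<Rightarrow> ('o \<Rightarrow> 'b) \<Rightarrow> nat set
    \<Rightarrow> ((nat \<Rightarrow> 'a) \<times> 'b) pmf" where
  "joint_sub M X Y a = map_pmf (\<lambda>\<omega>. (restrict (\<lambda>i. X i \<omega>) a, Y \<omega>)) M"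

definition MI_sub :: "'o pmf \<Rightarrow> (nat \<Rightarrow> 'o \<Rightarrow> 'a) \<Rightarrow> ('o \<Rightarrow> 'b) \<Rightarrow> nat set \<Rightarrow> real" where
  "MI_sub M X Y a = mutual_info (joint_sub M X Y a)"

definition MI_single :: "'o pmf \<Rightarrow> (nat \<Rightarrow> 'o \<Rightarrow> 'a) \<Rightarrow> ('o \<Rightarrow> 'b) \<Rightarrow> nat \<Rightarrow> real" where
  "MI_single M X Y i = mutual_info (map_pmf (\<lambda>\<omega>. (X i \<omega>, Y \<omega>)) M)"

definition antichains :: "nat \<Rightarrow> nat set set set" where
  "antichains n = {\<alpha>. \<alpha> \<noteq> {} \<and> (\<forall>b\<in>\<alpha>. b \<noteq> {} \<and> b \<subseteq> {1..n})
                      \<and> (\<forall>b\<in>\<alpha>. \<forall>c\<in>\<alpha>. \<not> b \<subset> c)}"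

definition is_PID :: "nat \<Rightarrow> (nat set \<Rightarrow> real) \<Rightarrow> (nat set set \<Rightarrow> real) \<Rightarrow> bool" where
  "is_PID n I PI \<longleftrightarrow> (\<forall>a. a \<noteq> {} \<and> a \<subseteq> {1..n} \<longrightarrow>
      I a = (\<Sum>\<alpha>\<in>{\<alpha>\<in>antichains n. \<exists>b\<in>\<alpha>. b \<subseteq> a}. PI \<alpha>))"

definition degree_red :: "nat \<Rightarrow> nat set set \<Rightarrow> nat" where
  "degree_red n \<alpha> = card {i\<in>{1..n}. {i} \<in> \<alpha>}"

definition avg_degree_red :: "nat \<Rightarrow> real \<Rightarrow> (nat set set \<Rightarrow> real) \<Rightarrow> real" where
  "avg_degree_red n Itot PI =
     (\<Sum>k=0..n. real k * (\<Sum>\<alpha>\<in>{\<alpha>\<in>antichains n. degree_red n \<alpha> = k}. PI \<alpha> / Itot))"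

end

theory Submission
  imports Defs
begin

lemma mi_inj:
  fixes p :: "('u \<times> 'v) pmf" and g :: "'u \<Rightarrow> 'w"
  assumes inj: "inj g"
  shows "mutual_info (map_pmf (\<lambda>(u,v). (g u, v)) p) = mutual_info p"
proof -
  define h where "h = (\<lambda>(u::'u,v::'v). (g u, v))"
  have injh: "inj h" using inj unfolding h_def inj_def by auto
  define p' where "p' = map_pmf h p"
  have m1: "map_pmf fst p' = map_pmf g (map_pmf fst p)"
    unfolding p'_def h_def by (simp add: map_pmf_comp split_beta)
  have m2: "map_pmf snd p' = map_pmf snd p"
    unfolding p'_def h_def by (simp add: map_pmf_comp split_beta)
  define F where "F = (\<lambda>(u,v). pmf p' (u,v) * log 2 (pmf p' (u,v) / (pmf (map_pmf fst p') u * pmf (map_pmf snd p') v)))"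
  define G where "G = (\<lambda>(u,v). pmf p (u,v) * log 2 (pmf p (u,v) / (pmf (map_pmf fst p) u * pmf (map_pmf snd p) v)))"
  have "mutual_info p' = infsum F UNIV" unfolding mutual_info_def F_def ..
  also have "\<dots> = infsum F (range h)"
  proof (rule infsum_cong_neutral)
    fix x assume "x \<in> UNIV - range h"
    hence "pmf p' x = 0" unfolding p'_def by (intro pmf_map_outside) auto
    thus "F x = 0" unfolding F_def by (cases x) auto
  qed auto
  also have "\<dots> = infsum (F \<circ> h) UNIV" by (rule infsum_reindex) (use injh in \<open>auto simp: inj_on_def\<close>)
  also have "\<dots> = infsum G UNIV"
  proof (rule infsum_cong)
    fix x :: "'u \<times> 'v"
    obtain u v where x: "x = (u,v)" by (cases x)
    have "pmf p' (g u, v) = pmf p (u,v)" unfolding p'_def h_def[symmetric]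
      using pmf_map_inj'[OF injh, of p "(u,v)"] by (simp add: h_def)
    moreover have "pmf (map_pmf fst p') (g u) = pmf (map_pmf fst p) u"
      unfolding m1 by (rule pmf_map_inj'[OF inj])
    ultimately show "(F \<circ> h) x = G x" unfolding F_def G_def x h_def by (simp add: m2)
  qed
  also have "\<dots> = mutual_info p" unfolding mutual_info_def G_def ..
  finally show ?thesis unfolding p'_def h_def .
qed


lemma MI_sub_single:
  fixes M :: "'o pmf" and X :: "nat \<Rightarrow> 'o \<Rightarrow> 'a" and Y :: "'o \<Rightarrow> 'b"
  shows "MI_sub M X Y {i} = MI_single M X Y i"
proof -
  define g where "g = (\<lambda>u::'a. (\<lambda>j::nat. if j = i then u else undefined))"
  have inj: "inj g"
  proof (rule injI)
    fix x y assume "g x = g y"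
    hence "g x i = g y i" by simp
    thus "x = y" by (simp add: g_def)
  qed
  have "joint_sub M X Y {i} = map_pmf (\<lambda>(u,v). (g u, v)) (map_pmf (\<lambda>\<omega>. (X i \<omega>, Y \<omega>)) M)"
    unfolding joint_sub_def g_def by (auto simp: map_pmf_comp restrict_def fun_eq_iff intro!: map_pmf_cong)
  thus ?thesis unfolding MI_sub_def MI_single_def using mi_inj[OF inj] by simp
qed

lemma finite_antichains: "finite (antichains n)"
proof (rule finite_subset)
  show "antichains n \<subseteq> Pow (Pow {1..n})" unfolding antichains_def by auto
qed auto

theorem proposition1:
  fixes M :: "'o pmf" and X :: "nat \<Rightarrow> 'o \<Rightarrow> 'a" and Y :: "'o \<Rightarrow> 'b"
    and n :: nat and PI :: "nat set set \<Rightarrow> real"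
  assumes "n \<ge> 1"
    and "MI_sub M X Y {1..n} > 0"
    and "is_PID n (MI_sub M X Y) PI"
  shows "avg_degree_red n (MI_sub M X Y {1..n}) PI
           = (\<Sum>i=1..n. MI_single M X Y i) / MI_sub M X Y {1..n}"
proof -
  define T where "T = MI_sub M X Y {1..n}"
  define A where "A = antichains n"
  have fA: "finite A" unfolding A_def by (rule finite_antichains)
  have rle: "degree_red n \<alpha> \<le> n" for \<alpha>
    unfolding degree_red_def by (rule order_trans[OF card_mono[of "{1..n}"]]) auto
  have "avg_degree_red n T PI = (\<Sum>k=0..n. \<Sum>\<alpha>\<in>{\<alpha>\<in>A. degree_red n \<alpha> = k}. real (degree_red n \<alpha>) * PI \<alpha> / T)"
    unfolding avg_degree_red_def A_def by (simp add: sum_distrib_left)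
  also have "\<dots> = (\<Sum>\<alpha>\<in>A. real (degree_red n \<alpha>) * PI \<alpha> / T)"
    by (rule sum.group) (use fA rle in auto)
  also have "\<dots> = (\<Sum>\<alpha>\<in>A. \<Sum>i\<in>{1..n}. if {i} \<in> \<alpha> then PI \<alpha> / T else 0)"
  proof (rule sum.cong)
    fix \<alpha> assume "\<alpha> \<in> A"
    have "(\<Sum>i\<in>{1..n}. if {i} \<in> \<alpha> then PI \<alpha> / T else 0) = (\<Sum>i\<in>{i\<in>{1..n}. {i} \<in> \<alpha>}. PI \<alpha> / T)"
      by (rule sum.inter_filter[symmetric]) simp
    also have "\<dots> = real (degree_red n \<alpha>) * PI \<alpha> / T" unfolding degree_red_def by simp
    finally show "real (degree_red n \<alpha>) * PI \<alpha> / T = (\<Sum>i\<in>{1..n}. if {i} \<in> \<alpha> then PI \<alpha> / T else 0)" by simp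
  qed simp
  also have "\<dots> = (\<Sum>i\<in>{1..n}. \<Sum>\<alpha>\<in>A. if {i} \<in> \<alpha> then PI \<alpha> / T else 0)"
    by (rule sum.swap)
  also have "\<dots> = (\<Sum>i\<in>{1..n}. MI_single M X Y i / T)"
  proof (rule sum.cong)
    fix i assume i: "i \<in> {1..n}"
    have set: "{\<alpha>\<in>A. \<exists>b\<in>\<alpha>. b \<subseteq> {i}} = {\<alpha>\<in>A. {i} \<in> \<alpha>}"
    proof -
      have "(\<exists>b\<in>\<alpha>. b \<subseteq> {i}) \<longleftrightarrow> {i} \<in> \<alpha>" if "\<alpha> \<in> A" for \<alpha>
      proof
        assume "\<exists>b\<in>\<alpha>. b \<subseteq> {i}"
        then obtain b where b: "b \<in> \<alpha>" "b \<subseteq> {i}" by blast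
        have "b \<noteq> {}" using that b(1) unfolding A_def antichains_def by blast
        hence "b = {i}" using b(2) by blast
        thus "{i} \<in> \<alpha>" using b(1) by simp
      qed blast
      thus ?thesis by auto
    qed
    have "MI_single M X Y i = MI_sub M X Y {i}" by (simp add: MI_sub_single)
    also have "\<dots> = (\<Sum>\<alpha>\<in>{\<alpha>\<in>A. {i} \<in> \<alpha>}. PI \<alpha>)"
      using assms(3) i unfolding is_PID_def A_def[symmetric] set[symmetric] by auto
    finally have "MI_single M X Y i / T = (\<Sum>\<alpha>\<in>{\<alpha>\<in>A. {i} \<in> \<alpha>}. PI \<alpha> / T)"
      by (simp add: sum_divide_distrib)
    also have "\<dots> = (\<Sum>\<alpha>\<in>A. if {i} \<in> \<alpha> then PI \<alpha> / T else 0)"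
      using fA by (simp add: sum.inter_filter)
    finally show "(\<Sum>\<alpha>\<in>A. if {i} \<in> \<alpha> then PI \<alpha> / T else 0) = MI_single M X Y i / T" by simp
  qed simp
  also have "\<dots> = (\<Sum>i=1..n. MI_single M X Y i) / T" by (simp add: sum_divide_distrib)
  finally show ?thesis unfolding T_def .
qed

end
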